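(* Let $0<\delta\le 1/2$. Let $A\subset\mathbb{R}^d$ be a finite nonempty set and $C\subset\mathbb{R}^d$ a finite nonempty set of centers. For $a\in A$ let $D(a) = \min_{c\in C}\|a-c\|$, and let $\mathcal{D}: A\to\mathbb{R}_{\ge0}$ satisfy $(1-\delta)D(a)\le\mathcal D(a)\le(1+\delta)D(a)$ for all $a\in A$, with $\sum_{a\in A}\mathcal D(a)^2>0$. Let $c$ be a random point of $A$ chosen with $\Pr[c=a_0] = \mathcal D(a_0)^2/\sum_{a\in A}\mathcal D(a)^2$. Then $$\mathbb{E}\big[\mathrm{cost}(A, C\cup\{c\})\big] \le 72\cdot OPT(A).$$
   Context: For a finite set $A$ and center set $C'$, $\mathrm{cost}(A,C') = \sum_{a\in A}\min_{c'\in C'}\|a-c'\|^2$. $OPT(A) = \sum_{a\in A}\|a-\mu(A)\|^2$ where $\mu(A) = \frac1{|A|}\sum_{a\in A}a$ is the centroid (the optimal $1$-means cost of $A$). *)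

theory Defs
  imports "HOL-Analysis.Analysis"
begin

definition kcost :: "'a::euclidean_space set \<Rightarrow> 'a set \<Rightarrow> real" where
  "kcost A C' = (\<Sum>a\<in>A. Min ((\<lambda>c'. (norm (a - c'))\<^sup>2) ` C'))"

definition centroid :: "'a::euclidean_space set \<Rightarrow> 'a" where
  "centroid A = (1 / real (card A)) *\<^sub>R (\<Sum>a\<in>A. a)"

definition OPT :: "'a::euclidean_space set \<Rightarrow> real" where
  "OPT A = (\<Sum>a\<in>A. (norm (a - centroid A))\<^sup>2)"

definition distC :: "'a::euclidean_space set \<Rightarrow> 'a \<Rightarrow> real" where
  "distC C a = Min ((\<lambda>c. norm (a - c)) ` C)"

end

theory Submission
  imports Defs
begin

lemma distC_attained:
  assumes "finite C" "C \<noteq> {}"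
  shows "\<exists>c\<in>C. distC C a = norm (a - c)"
proof -
  have "Min ((\<lambda>c. norm (a - c)) ` C) \<in> (\<lambda>c. norm (a - c)) ` C"
    using assms by (intro Min_in) auto
  thus ?thesis unfolding distC_def by auto
qed

lemma distC_le:
  assumes "finite C" "c \<in> C"
  shows "distC C a \<le> norm (a - c)"
  unfolding distC_def using assms by (intro Min_le) auto

lemma distC_nonneg:
  assumes "finite C" "C \<noteq> {}"
  shows "distC C a \<ge> 0"
  using distC_attained[OF assms, of a] by auto

lemma min_le1:
  assumes "finite C"
  shows "Min ((\<lambda>c'. (norm (a - c'))\<^sup>2) ` (C \<union> {a0})) \<le> (norm (a - a0))\<^sup>2"
  using assms by (intro Min_le) auto

lemma min_le2:
  assumes "finite C" "C \<noteq> {}"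
  shows "Min ((\<lambda>c'. (norm (a - c'))\<^sup>2) ` (C \<union> {a0})) \<le> (distC C a)\<^sup>2"
proof -
  obtain c where c: "c \<in> C" "distC C a = norm (a - c)" using distC_attained[OF assms] by blast
  have "Min ((\<lambda>c'. (norm (a - c'))\<^sup>2) ` (C \<union> {a0})) \<le> (norm (a - c))\<^sup>2"
    using assms c by (intro Min_le) auto
  thus ?thesis using c by simp
qed

lemma kcost_le1:
  assumes "finite C"
  shows "kcost A (C \<union> {a0}) \<le> (\<Sum>a\<in>A. (norm (a - a0))\<^sup>2)"
  unfolding kcost_def by (intro sum_mono min_le1 assms)

lemma kcost_le2:
  assumes "finite C" "C \<noteq> {}"
  shows "kcost A (C \<union> {a0}) \<le> (\<Sum>a\<in>A. (distC C a)\<^sup>2)"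
  unfolding kcost_def by (intro sum_mono min_le2 assms)

lemma kcost_nonneg: assumes "finite C'" "C' \<noteq> {}" shows "kcost A C' \<ge> 0"
proof -
  have "\<And>a. a \<in> A \<Longrightarrow> Min ((\<lambda>c'. (norm (a - c'))\<^sup>2) ` C') \<ge> 0"
  proof -
    fix a
    show "Min ((\<lambda>c'. (norm (a - c'))\<^sup>2) ` C') \<ge> 0"
    proof -
      have "Min ((\<lambda>c'. (norm (a - c'))\<^sup>2) ` C') \<in> (\<lambda>c'. (norm (a - c'))\<^sup>2) ` C'"
        using assms by (intro Min_in) auto
      then show ?thesis by auto
    qed
  qed
  then show ?thesis unfolding kcost_def by (intro sum_nonneg) auto
qed

lemma tri_sq:
  assumes "finite C" "C \<noteq> {}"
  shows "(distC C a0)\<^sup>2 \<le> 2 * (distC C a)\<^sup>2 + 2 * (norm (a - a0))\<^sup>2"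
proof -
  obtain c where c: "c \<in> C" "distC C a = norm (a - c)" using distC_attained[OF assms] by blast
  have "distC C a0 \<le> norm (a0 - c)" using distC_le[OF assms(1) c(1)] .
  also have "\<dots> \<le> norm (a - a0) + norm (a - c)"
    using norm_triangle_ineq[of "a0 - a" "a - c"] by (simp add: norm_minus_commute)
  finally have h: "distC C a0 \<le> norm (a - a0) + distC C a" using c by simp
  have "0 \<le> distC C a0" using distC_nonneg[OF assms] .
  then have "(distC C a0)\<^sup>2 \<le> (norm (a - a0) + distC C a)\<^sup>2"
    using h by (intro power_mono) auto
  also have "\<dots> \<le> 2 * (distC C a)\<^sup>2 + 2 * (norm (a - a0))\<^sup>2"
  proof -
    have "0 \<le> (norm (a - a0) - distC C a)\<^sup>2" by simp
    then show ?thesis unfolding power2_eq_square by (simp add: algebra_simps)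
  qed
  finally show ?thesis .
qed

lemma norm_add_sq:
  fixes u v :: "'a::real_inner"
  shows "(norm (u + v))\<^sup>2 = (norm u)\<^sup>2 + 2 * (u \<bullet> v) + (norm v)\<^sup>2"
  by (simp add: power2_norm_eq_inner inner_add_left inner_add_right inner_commute)

lemma pair_sum:
  fixes A :: "'a::euclidean_space set"
  assumes "finite A" "A \<noteq> {}"
  shows "(\<Sum>x\<in>A. \<Sum>a\<in>A. (norm (a - x))\<^sup>2) = 2 * real (card A) * OPT A"
proof -
  define n where "n = real (card A)"
  define \<mu> where "\<mu> = centroid A"
  have npos: "n > 0" unfolding n_def using assms by (simp add: card_gt_0_iff)
  have s0: "(\<Sum>a\<in>A. a - \<mu>) = 0"
  proof -
    have "(\<Sum>a\<in>A. a - \<mu>) = (\<Sum>a\<in>A. a) - n *\<^sub>R \<mu>"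
      by (simp add: sum_subtractf n_def sum_constant_scaleR)
    also have "n *\<^sub>R \<mu> = (\<Sum>a\<in>A. a)"
      unfolding \<mu>_def centroid_def n_def[symmetric] using npos by simp
    finally show ?thesis by simp
  qed
  have key: "(\<Sum>a\<in>A. (norm (a - x))\<^sup>2) = OPT A + n * (norm (\<mu> - x))\<^sup>2" for x
  proof -
    have e: "(norm (a - x))\<^sup>2 = (norm (a - \<mu>))\<^sup>2 + 2 * ((a - \<mu>) \<bullet> (\<mu> - x)) + (norm (\<mu> - x))\<^sup>2" for a
    proof -
      have "a - x = (a - \<mu>) + (\<mu> - x)" by simp
      then have "(norm (a - x))\<^sup>2 = (norm ((a - \<mu>) + (\<mu> - x)))\<^sup>2" by simp
      also have "\<dots> = (norm (a - \<mu>))\<^sup>2 + 2 * ((a - \<mu>) \<bullet> (\<mu> - x)) + (norm (\<mu> - x))\<^sup>2"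
        by (rule norm_add_sq)
      finally show ?thesis .
    qed
    have "(\<Sum>a\<in>A. (norm (a - x))\<^sup>2) = (\<Sum>a\<in>A. (norm (a - \<mu>))\<^sup>2) + 2 * (\<Sum>a\<in>A. (a - \<mu>) \<bullet> (\<mu> - x)) + n * (norm (\<mu> - x))\<^sup>2"
    proof -
      have "(\<Sum>a\<in>A. (norm (a - x))\<^sup>2) = (\<Sum>a\<in>A. (norm (a - \<mu>))\<^sup>2 + 2 * ((a - \<mu>) \<bullet> (\<mu> - x)) + (norm (\<mu> - x))\<^sup>2)"
        by (rule sum.cong[OF refl e])
      then show ?thesis by (simp add: sum.distrib sum_distrib_left n_def)
    qed
    also have "(\<Sum>a\<in>A. (a - \<mu>) \<bullet> (\<mu> - x)) = 0"
    proof -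
      have "(\<Sum>a\<in>A. (a - \<mu>) \<bullet> (\<mu> - x)) = (\<Sum>a\<in>A. a - \<mu>) \<bullet> (\<mu> - x)"
        by (rule inner_sum_left[symmetric])
      then show ?thesis using s0 by simp
    qed
    finally show ?thesis unfolding OPT_def \<mu>_def by simp
  qed
  have "(\<Sum>x\<in>A. \<Sum>a\<in>A. (norm (a - x))\<^sup>2) = (\<Sum>x\<in>A. OPT A + n * (norm (\<mu> - x))\<^sup>2)"
    by (simp add: key)
  also have "\<dots> = n * OPT A + n * (\<Sum>x\<in>A. (norm (x - \<mu>))\<^sup>2)"
  proof -
    have "(\<Sum>x\<in>A. (norm (\<mu> - x))\<^sup>2) = (\<Sum>x\<in>A. (norm (x - \<mu>))\<^sup>2)"
      by (intro sum.cong refl) (rule arg_cong[where f="\<lambda>t. t\<^sup>2"], rule norm_minus_commute)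
    then show ?thesis by (simp add: sum.distrib sum_distrib_left[symmetric] n_def)
  qed
  also have "(\<Sum>x\<in>A. (norm (x - \<mu>))\<^sup>2) = OPT A" unfolding OPT_def \<mu>_def ..
  finally show ?thesis unfolding n_def by simp
qed


theorem mainTheorem5:
  fixes A C :: "'a::euclidean_space set"
    and \<D> :: "'a \<Rightarrow> real"
    and \<delta> :: real
  assumes "0 < \<delta>" and "\<delta> \<le> 1/2"
    and "finite A" and "A \<noteq> {}"
    and "finite C" and "C \<noteq> {}"
    and "\<forall>a\<in>A. \<D> a \<ge> 0"
    and "\<forall>a\<in>A. (1 - \<delta>) * distC C a \<le> \<D> a \<and> \<D> a \<le> (1 + \<delta>) * distC C a"
    and "(\<Sum>a\<in>A. (\<D> a)\<^sup>2) > 0"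
  shows "(\<Sum>a0\<in>A. ((\<D> a0)\<^sup>2 / (\<Sum>a\<in>A. (\<D> a)\<^sup>2)) * kcost A (C \<union> {a0}))
           \<le> 72 * OPT A"
proof -
  define S where "S = (\<Sum>a\<in>A. (\<D> a)\<^sup>2)"
  define T where "T = (\<Sum>a\<in>A. (distC C a)\<^sup>2)"
  define n where "n = real (card A)"
  define P where "P = (\<lambda>x. \<Sum>a\<in>A. (norm (a - x))\<^sup>2)"
  define K where "K = (\<lambda>x. kcost A (C \<union> {x}))"
  have Spos: "S > 0" using assms(9) S_def by simp
  have npos: "n > 0" unfolding n_def using assms by (simp add: card_gt_0_iff)
  have Tnn: "T \<ge> 0" unfolding T_def by (intro sum_nonneg) auto
  have Pnn: "P x \<ge> 0" for x unfolding P_def by (intro sum_nonneg) auto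
  have Knn: "K x \<ge> 0" for x unfolding K_def using assms(5,6) by (intro kcost_nonneg) auto
  have KP: "K x \<le> P x" for x unfolding K_def P_def by (rule kcost_le1[OF assms(5)])
  have KT: "K x \<le> T" for x unfolding K_def T_def by (rule kcost_le2[OF assms(5,6)])
  have dnn: "distC C a \<ge> 0" for a using distC_nonneg[OF assms(5,6)] .
  have TS: "T \<le> 4 * S"
  proof -
    have "(distC C a)\<^sup>2 \<le> 4 * (\<D> a)\<^sup>2" if a: "a \<in> A" for a
    proof -
      have h: "(1 - \<delta>) * distC C a \<le> \<D> a" using assms(8) a by auto
      have "distC C a / 2 \<le> (1 - \<delta>) * distC C a" using assms(2) dnn[of a]
        by (simp add: mult_right_mono[of "1/2" "1-\<delta>" "distC C a", simplified] )
      then have "distC C a \<le> 2 * \<D> a" using h by linarith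
      then have "(distC C a)\<^sup>2 \<le> (2 * \<D> a)\<^sup>2" using dnn[of a] by (intro power_mono) auto
      then show ?thesis by (simp add: power_mult_distrib)
    qed
    then have "T \<le> (\<Sum>a\<in>A. 4 * (\<D> a)\<^sup>2)" unfolding T_def by (intro sum_mono) auto
    then show ?thesis by (simp add: S_def sum_distrib_left)
  qed
  have Dbound: "(\<D> a0)\<^sup>2 \<le> (9/4) * ((2 * T + 2 * P a0) / n)" if a0: "a0 \<in> A" for a0
  proof -
    have h: "\<D> a0 \<le> (1 + \<delta>) * distC C a0" "\<D> a0 \<ge> 0" using assms(7,8) a0 by auto
    have "(1 + \<delta>) * distC C a0 \<le> (3/2) * distC C a0" using assms(2) dnn[of a0]
      by (intro mult_right_mono) auto
    then have "\<D> a0 \<le> (3/2) * distC C a0" using h by linarith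
    then have "(\<D> a0)\<^sup>2 \<le> ((3/2) * distC C a0)\<^sup>2" using h by (intro power_mono) auto
    then have 1: "(\<D> a0)\<^sup>2 \<le> (9/4) * (distC C a0)\<^sup>2" by (simp add: power_mult_distrib power2_eq_square)
    have "(\<Sum>a\<in>A. (distC C a0)\<^sup>2) \<le> (\<Sum>a\<in>A. 2 * (distC C a)\<^sup>2 + 2 * (norm (a - a0))\<^sup>2)"
      by (intro sum_mono tri_sq[OF assms(5,6)])
    then have "n * (distC C a0)\<^sup>2 \<le> 2 * T + 2 * P a0"
      by (simp add: n_def T_def P_def sum.distrib sum_distrib_left)
    then have "(distC C a0)\<^sup>2 \<le> (2 * T + 2 * P a0) / n" using npos
      by (simp add: field_simps)
    with 1 show ?thesis by linarith
  qed
  have each: "(\<D> a0)\<^sup>2 * K a0 \<le> (9 / n) * (T * P a0)" if a0: "a0 \<in> A" for a0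
  proof -
    have "(\<D> a0)\<^sup>2 * K a0 \<le> (9/4) * ((2 * T + 2 * P a0) / n) * K a0"
      using Dbound[OF a0] Knn by (intro mult_right_mono) auto
    also have "\<dots> = (9/(2*n)) * (T * K a0 + P a0 * K a0)" using npos by (simp add: field_simps)
    also have "\<dots> \<le> (9/(2*n)) * (T * P a0 + P a0 * T)"
      using npos Tnn Pnn[of a0] KP[of a0] KT[of a0]
      by (intro mult_left_mono add_mono mult_left_mono) auto
    also have "\<dots> = (9 / n) * (T * P a0)" by (simp add: field_simps)
    finally show ?thesis .
  qed
  have OPTnn: "OPT A \<ge> 0" unfolding OPT_def by (intro sum_nonneg) auto
  have "(\<Sum>a0\<in>A. ((\<D> a0)\<^sup>2 / S) * K a0) = (\<Sum>a0\<in>A. (\<D> a0)\<^sup>2 * K a0) / S"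
    by (simp add: sum_divide_distrib)
  also have "\<dots> \<le> (\<Sum>a0\<in>A. (9 / n) * (T * P a0)) / S"
    using Spos each by (intro divide_right_mono sum_mono) auto
  also have "(\<Sum>a0\<in>A. (9 / n) * (T * P a0)) = (9 / n) * T * (\<Sum>a0\<in>A. P a0)"
    by (simp add: sum_distrib_left mult.assoc)
  also have "(\<Sum>a0\<in>A. P a0) = 2 * n * OPT A" unfolding P_def n_def by (rule pair_sum[OF assms(3,4)])
  also have "(9 / n) * T * (2 * n * OPT A) = 18 * T * OPT A" using npos by (simp add: field_simps)
  also have "18 * T * OPT A / S \<le> 18 * (4 * S) * OPT A / S"
    using Spos TS OPTnn by (intro divide_right_mono mult_right_mono) auto
  also have "\<dots> = 72 * OPT A" using Spos by (simp add: field_simps)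
  finally show ?thesis unfolding S_def K_def .
qed

end
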